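(* Let $\mu>0$, $\Omega\subseteq\Lambda$, and $V:\Omega\to\mathbb{R}$ with $\frac12\mu\le V(x)\le\mu$ for all $x\in\Omega$. Let $\chi=\mathbb{1}[-\Delta_\Omega-V<0]$ (spectral projection on $\mathbb{C}^\Omega$) and $\rho_\chi(x)=\chi_{x,x}$. Then for every $x\in\Omega$ and every $\beta>0$, $$\rho_\chi(x)\ \ge\ e^{-\beta\mu/2}\Big[\big(e^{\beta\Delta_\Omega}\big)_{x,x}-e^{-\beta\mu/2}\Big].$$
   Context: $\Lambda=\mathbb{Z}_L^d$; $T_{x,y}=1$ if $|x-y|_1=1$, else $0$; $\Delta_{x,y}=T_{x,y}-2d\delta_{x,y}$; $\Delta_\Omega=P_\Omega\Delta P_\Omega$ regarded as an operator on $\mathbb{C}^\Omega$; $V$ acts as a diagonal multiplication operator. *)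

theory Defs
  imports "HOL-Analysis.Analysis"
begin

definition torus :: "nat \<Rightarrow> nat \<Rightarrow> int list set" where
  "torus L d = {x. length x = d \<and> (\<forall>i<d. 0 \<le> x ! i \<and> x ! i < int L)}"

definition cdist :: "nat \<Rightarrow> int \<Rightarrow> int \<Rightarrow> int" where
  "cdist L a b = min ((a - b) mod int L) ((b - a) mod int L)"

definition tdist1 :: "nat \<Rightarrow> nat \<Rightarrow> int list \<Rightarrow> int list \<Rightarrow> int" where
  "tdist1 L d x y = (\<Sum>i<d. cdist L (x ! i) (y ! i))"

definition hop :: "nat \<Rightarrow> nat \<Rightarrow> int list \<Rightarrow> int list \<Rightarrow> real" where
  "hop L d x y = (if tdist1 L d x y = 1 then 1 else 0)"

definition lap :: "nat \<Rightarrow> nat \<Rightarrow> int list \<Rightarrow> int list \<Rightarrow> real" where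
  "lap L d x y = hop L d x y - 2 * real d * (if x = y then 1 else 0)"

text \<open>Matrices on \<open>\<Omega>\<close> are functions \<open>'a \<Rightarrow> 'a \<Rightarrow> 'b\<close>, only their values on
  \<open>\<Omega> \<times> \<Omega>\<close> being relevant (this realizes the compression \<open>P_\<Omega> A P_\<Omega>\<close>).\<close>
definition mat_mult :: "'a set \<Rightarrow> ('a \<Rightarrow> 'a \<Rightarrow> 'b::comm_ring_1) \<Rightarrow> ('a \<Rightarrow> 'a \<Rightarrow> 'b) \<Rightarrow> 'a \<Rightarrow> 'a \<Rightarrow> 'b" where
  "mat_mult \<Omega> A B x y = (\<Sum>z\<in>\<Omega>. A x z * B z y)"

primrec mat_pow :: "'a set \<Rightarrow> ('a \<Rightarrow> 'a \<Rightarrow> 'b::comm_ring_1) \<Rightarrow> nat \<Rightarrow> 'a \<Rightarrow> 'a \<Rightarrow> 'b" where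
  "mat_pow \<Omega> A 0 = (\<lambda>x y. if x = y then 1 else 0)"
| "mat_pow \<Omega> A (Suc n) = mat_mult \<Omega> A (mat_pow \<Omega> A n)"

definition mat_exp :: "'a set \<Rightarrow> ('a \<Rightarrow> 'a \<Rightarrow> real) \<Rightarrow> 'a \<Rightarrow> 'a \<Rightarrow> real" where
  "mat_exp \<Omega> A x y = (\<Sum>n. mat_pow \<Omega> A n x y / fact n)"

definition cinner :: "'a set \<Rightarrow> ('a \<Rightarrow> complex) \<Rightarrow> ('a \<Rightarrow> complex) \<Rightarrow> complex" where
  "cinner \<Omega> v w = (\<Sum>x\<in>\<Omega>. v x * cnj (w x))"

definition eigenbasis :: "'a set \<Rightarrow> ('a \<Rightarrow> 'a \<Rightarrow> complex) \<Rightarrow> ('a \<Rightarrow> 'a \<Rightarrow> complex) \<Rightarrow> ('a \<Rightarrow> real) \<Rightarrow> bool" where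
  "eigenbasis \<Omega> H b lam \<longleftrightarrow>
     (\<forall>i\<in>\<Omega>. \<forall>j\<in>\<Omega>. cinner \<Omega> (b i) (b j) = (if i = j then 1 else 0)) \<and>
     (\<forall>i\<in>\<Omega>. \<forall>x\<in>\<Omega>. (\<Sum>y\<in>\<Omega>. H x y * b i y) = complex_of_real (lam i) * b i x)"

text \<open>Spectral projection \<open>\<one>[H < 0]\<close> of a Hermitian matrix H on \<open>\<complex>^\<Omega>\<close>:
  the sum of the rank-one projections onto the eigenvectors with negative eigenvalue
  (independent of the chosen orthonormal eigenbasis).\<close>
definition neg_spectral_proj :: "'a set \<Rightarrow> ('a \<Rightarrow> 'a \<Rightarrow> complex) \<Rightarrow> 'a \<Rightarrow> 'a \<Rightarrow> complex" where
  "neg_spectral_proj \<Omega> H x y =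
     (let (b, lam) = (SOME (b, lam). eigenbasis \<Omega> H b lam)
      in \<Sum>i\<in>{i\<in>\<Omega>. lam i < 0}. b i x * cnj (b i y))"

end

theory Submission
  imports Defs
begin

lemma eigenbasis_norm1:
  assumes eb: "eigenbasis \<Omega> H b lam" and i: "i \<in> \<Omega>"
  shows "(\<Sum>z\<in>\<Omega>. (cmod (b i z))^2) = 1"
proof -
  have "cinner \<Omega> (b i) (b i) = 1" using eb i unfolding eigenbasis_def by auto
  hence "(\<Sum>z\<in>\<Omega>. b i z * cnj (b i z)) = 1" unfolding cinner_def .
  hence "complex_of_real (\<Sum>z\<in>\<Omega>. (cmod (b i z))^2) = 1"
    by (simp only: of_real_sum complex_norm_square)
  thus ?thesis by (metis of_real_eq_1_iff)
qed

lemma bessel_expand: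
  assumes fin: "finite \<Omega>" and eb: "eigenbasis \<Omega> H b lam" and z: "z \<in> \<Omega>"
  shows "(\<Sum>y\<in>\<Omega>. ((if y = z then 1 else 0) - (\<Sum>i\<in>\<Omega>. cnj (b i z) * b i y))
            * cnj ((if y = z then 1 else 0) - (\<Sum>i\<in>\<Omega>. cnj (b i z) * b i y)))
         = 1 - complex_of_real (\<Sum>i\<in>\<Omega>. (cmod (b i z))^2)"
proof -
  define h where "h y = (\<Sum>i\<in>\<Omega>. cnj (b i z) * b i y)" for y
  define s where "s = complex_of_real (\<Sum>i\<in>\<Omega>. (cmod (b i z))^2)"
  have hz: "h z = s" unfolding h_def s_def
    by (simp only: of_real_sum complex_norm_square mult.commute)
  have cs: "cnj s = s" unfolding s_def by simp
  have orth: "\<And>i j. i \<in> \<Omega> \<Longrightarrow> j \<in> \<Omega> \<Longrightarrow> (\<Sum>y\<in>\<Omega>. b i y * cnj (b j y)) = (if i = j then 1 else 0)"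
    using eb unfolding eigenbasis_def cinner_def by auto
  have hh: "(\<Sum>y\<in>\<Omega>. h y * cnj (h y)) = s"
  proof -
    have "(\<Sum>y\<in>\<Omega>. h y * cnj (h y)) = (\<Sum>y\<in>\<Omega>. \<Sum>j\<in>\<Omega>. \<Sum>i\<in>\<Omega>. cnj (b i z) * b j z * (b i y * cnj (b j y)))"
      unfolding h_def by (simp add: sum_distrib_left sum_distrib_right mult_ac)
    also have "\<dots> = (\<Sum>j\<in>\<Omega>. \<Sum>y\<in>\<Omega>. \<Sum>i\<in>\<Omega>. cnj (b i z) * b j z * (b i y * cnj (b j y)))"
      by (rule sum.swap)
    also have "\<dots> = (\<Sum>j\<in>\<Omega>. \<Sum>i\<in>\<Omega>. \<Sum>y\<in>\<Omega>. cnj (b i z) * b j z * (b i y * cnj (b j y)))"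
      by (rule sum.cong[OF refl], rule sum.swap)
    also have "\<dots> = (\<Sum>j\<in>\<Omega>. \<Sum>i\<in>\<Omega>. cnj (b i z) * b j z * (\<Sum>y\<in>\<Omega>. b i y * cnj (b j y)))"
      by (simp add: sum_distrib_left)
    also have "\<dots> = (\<Sum>j\<in>\<Omega>. cnj (b j z) * b j z)"
    proof (rule sum.cong[OF refl])
      fix j assume j: "j \<in> \<Omega>"
      have "(\<Sum>i\<in>\<Omega>. cnj (b i z) * b j z * (\<Sum>y\<in>\<Omega>. b i y * cnj (b j y)))
          = (\<Sum>i\<in>\<Omega>. if i = j then cnj (b i z) * b j z else 0)"
        using j by (intro sum.cong) (auto simp: orth)
      also have "\<dots> = cnj (b j z) * b j z" using fin j by simp
      finally show "(\<Sum>i\<in>\<Omega>. cnj (b i z) * b j z * (\<Sum>y\<in>\<Omega>. b i y * cnj (b j y))) = cnj (b j z) * b j z" .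
    qed
    also have "\<dots> = s" unfolding s_def by (simp only: of_real_sum complex_norm_square mult.commute)
    finally show ?thesis .
  qed
  have "(\<Sum>y\<in>\<Omega>. ((if y = z then 1 else 0) - h y) * cnj ((if y = z then 1 else 0) - h y))
      = (\<Sum>y\<in>\<Omega>. (if y = z then 1 - h y - cnj (h y) else 0) + h y * cnj (h y))"
    by (rule sum.cong) (auto simp: algebra_simps)
  also have "\<dots> = 1 - s - cnj s + s"
    using fin z by (simp add: sum.distrib hh hz)
  also have "\<dots> = 1 - s" using cs by simp
  finally show ?thesis unfolding h_def s_def .
qed

lemma eigenbasis_complete:
  assumes fin: "finite \<Omega>" and eb: "eigenbasis \<Omega> H b lam" and x: "x \<in> \<Omega>"
  shows "(\<Sum>i\<in>\<Omega>. (cmod (b i x))^2) = 1"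
    and "\<And>y. y \<in> \<Omega> \<Longrightarrow> (\<Sum>i\<in>\<Omega>. cnj (b i x) * b i y) = (if y = x then 1 else 0)"
proof -
  define s where "s z = (\<Sum>i\<in>\<Omega>. (cmod (b i z))^2)" for z
  define g where "g z y = (if y = z then 1 else 0) - (\<Sum>i\<in>\<Omega>. cnj (b i z) * b i y)" for z y
  have gs: "(\<Sum>y\<in>\<Omega>. (cmod (g z y))^2) = 1 - s z" if z: "z \<in> \<Omega>" for z
  proof -
    have "complex_of_real (\<Sum>y\<in>\<Omega>. (cmod (g z y))^2) = (\<Sum>y\<in>\<Omega>. g z y * cnj (g z y))"
      by (simp only: of_real_sum complex_norm_square)
    also have "\<dots> = 1 - complex_of_real (s z)"
      unfolding g_def s_def by (rule bessel_expand[OF fin eb z])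
    finally have "complex_of_real (\<Sum>y\<in>\<Omega>. (cmod (g z y))^2) = complex_of_real (1 - s z)" by simp
    thus ?thesis using of_real_eq_iff by blast
  qed
  have sle: "s z \<le> 1" if "z \<in> \<Omega>" for z
  proof -
    have "0 \<le> (\<Sum>y\<in>\<Omega>. (cmod (g z y))^2)" by (simp add: sum_nonneg)
    thus ?thesis using gs[OF that] by simp
  qed
  have "(\<Sum>z\<in>\<Omega>. s z) = (\<Sum>i\<in>\<Omega>. \<Sum>z\<in>\<Omega>. (cmod (b i z))^2)"
    unfolding s_def by (rule sum.swap)
  also have "\<dots> = (\<Sum>i\<in>\<Omega>. 1)" using eigenbasis_norm1[OF eb] by simp
  finally have "(\<Sum>z\<in>\<Omega>. 1 - s z) = 0" by (simp add: sum_subtractf)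
  hence "\<forall>z\<in>\<Omega>. 1 - s z = 0"
    using sum_nonneg_eq_0_iff[OF fin, of "\<lambda>z. 1 - s z"] sle by auto
  hence sx: "s x = 1" using x by auto
  thus "(\<Sum>i\<in>\<Omega>. (cmod (b i x))^2) = 1" unfolding s_def .
  have "(\<Sum>y\<in>\<Omega>. (cmod (g x y))^2) = 0" using gs[OF x] sx by simp
  hence "\<forall>y\<in>\<Omega>. (cmod (g x y))^2 = 0"
    using sum_nonneg_eq_0_iff[OF fin, of "\<lambda>y. (cmod (g x y))^2"] by auto
  hence "\<forall>y\<in>\<Omega>. g x y = 0" by simp
  thus "\<And>y. y \<in> \<Omega> \<Longrightarrow> (\<Sum>i\<in>\<Omega>. cnj (b i x) * b i y) = (if y = x then 1 else 0)"
    unfolding g_def by auto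
qed

lemma eigen_pow:
  assumes fin: "finite \<Omega>" and eb: "eigenbasis \<Omega> (\<lambda>y z. complex_of_real (M y z)) b lam"
    and x: "x \<in> \<Omega>"
  shows "y \<in> \<Omega> \<Longrightarrow> complex_of_real (mat_pow \<Omega> M n y x)
          = (\<Sum>i\<in>\<Omega>. cnj (b i x) * complex_of_real (lam i ^ n) * b i y)"
proof (induction n arbitrary: y)
  case 0
  show ?case using eigenbasis_complete(2)[OF fin eb x 0] by simp
next
  case (Suc n)
  have ev: "\<And>i. i \<in> \<Omega> \<Longrightarrow> (\<Sum>z\<in>\<Omega>. complex_of_real (M y z) * b i z) = complex_of_real (lam i) * b i y"
    using eb Suc.prems unfolding eigenbasis_def by auto
  have "complex_of_real (mat_pow \<Omega> M (Suc n) y x) = (\<Sum>z\<in>\<Omega>. complex_of_real (M y z) * complex_of_real (mat_pow \<Omega> M n z x))"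
    by (simp add: mat_mult_def)
  also have "\<dots> = (\<Sum>z\<in>\<Omega>. complex_of_real (M y z) * (\<Sum>i\<in>\<Omega>. cnj (b i x) * complex_of_real (lam i ^ n) * b i z))"
    using Suc.IH by simp
  also have "\<dots> = (\<Sum>i\<in>\<Omega>. cnj (b i x) * complex_of_real (lam i ^ n) * (\<Sum>z\<in>\<Omega>. complex_of_real (M y z) * b i z))"
  proof -
    have "(\<Sum>z\<in>\<Omega>. complex_of_real (M y z) * (\<Sum>i\<in>\<Omega>. cnj (b i x) * complex_of_real (lam i ^ n) * b i z))
      = (\<Sum>z\<in>\<Omega>. \<Sum>i\<in>\<Omega>. cnj (b i x) * complex_of_real (lam i ^ n) * (complex_of_real (M y z) * b i z))"
      by (simp add: sum_distrib_left mult_ac)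
    also have "\<dots> = (\<Sum>i\<in>\<Omega>. \<Sum>z\<in>\<Omega>. cnj (b i x) * complex_of_real (lam i ^ n) * (complex_of_real (M y z) * b i z))"
      by (rule sum.swap)
    also have "\<dots> = (\<Sum>i\<in>\<Omega>. cnj (b i x) * complex_of_real (lam i ^ n) * (\<Sum>z\<in>\<Omega>. complex_of_real (M y z) * b i z))"
      by (simp add: sum_distrib_left)
    finally show ?thesis .
  qed
  also have "\<dots> = (\<Sum>i\<in>\<Omega>. cnj (b i x) * complex_of_real (lam i ^ Suc n) * b i y)"
    by (rule sum.cong[OF refl]) (simp add: ev)
  finally show ?case .
qed

lemma eigen_pow_diag:
  assumes fin: "finite \<Omega>" and eb: "eigenbasis \<Omega> (\<lambda>y z. complex_of_real (M y z)) b lam"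
    and x: "x \<in> \<Omega>"
  shows "mat_pow \<Omega> M n x x = (\<Sum>i\<in>\<Omega>. lam i ^ n * (cmod (b i x))^2)"
proof -
  have "complex_of_real (mat_pow \<Omega> M n x x) = (\<Sum>i\<in>\<Omega>. cnj (b i x) * complex_of_real (lam i ^ n) * b i x)"
    by (rule eigen_pow[OF fin eb x x])
  also have "\<dots> = (\<Sum>i\<in>\<Omega>. complex_of_real (lam i ^ n) * complex_of_real ((cmod (b i x))^2))"
    by (simp only: complex_norm_square) (simp add: mult_ac)
  also have "\<dots> = complex_of_real (\<Sum>i\<in>\<Omega>. lam i ^ n * (cmod (b i x))^2)"
    by (simp only: of_real_sum of_real_mult)
  finally show ?thesis using of_real_eq_iff by blast
qed

lemma eigen_exp_sums:
  assumes fin: "finite \<Omega>" and eb: "eigenbasis \<Omega> (\<lambda>y z. complex_of_real (M y z)) b lam"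
    and x: "x \<in> \<Omega>"
  shows "(\<lambda>n. mat_pow \<Omega> M n x x / fact n) sums (\<Sum>i\<in>\<Omega>. exp (lam i) * (cmod (b i x))^2)"
proof -
  have "(\<lambda>n. \<Sum>i\<in>\<Omega>. lam i ^ n / fact n * (cmod (b i x))^2) sums (\<Sum>i\<in>\<Omega>. exp (lam i) * (cmod (b i x))^2)"
  proof (rule sums_sum)
    fix i
    show "(\<lambda>n. lam i ^ n / fact n * (cmod (b i x))^2) sums (exp (lam i) * (cmod (b i x))^2)"
      using sums_mult2[OF exp_converges[of "lam i"], of "(cmod (b i x))^2"]
      by (simp add: divide_inverse mult_ac)
  qed
  moreover have "(\<lambda>n. mat_pow \<Omega> M n x x / fact n) = (\<lambda>n. \<Sum>i\<in>\<Omega>. lam i ^ n / fact n * (cmod (b i x))^2)"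
    by (rule ext) (simp add: eigen_pow_diag[OF fin eb x] sum_divide_distrib)
  ultimately show ?thesis by simp
qed

lemma eigen_exp:
  assumes fin: "finite \<Omega>" and eb: "eigenbasis \<Omega> (\<lambda>y z. complex_of_real (M y z)) b lam"
    and x: "x \<in> \<Omega>"
  shows "mat_exp \<Omega> M x x = (\<Sum>i\<in>\<Omega>. exp (lam i) * (cmod (b i x))^2)"
  unfolding mat_exp_def using eigen_exp_sums[OF assms] by (rule sums_unique[symmetric])

lemma eigenbasis_shift:
  assumes fin: "finite \<Omega>" and eb: "eigenbasis \<Omega> (\<lambda>y z. complex_of_real (M y z)) b lam"
  shows "eigenbasis \<Omega> (\<lambda>y z. complex_of_real (c * M y z + (if y = z then s else 0))) b (\<lambda>i. c * lam i + s)"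
  unfolding eigenbasis_def
proof (intro conjI ballI)
  fix i j assume "i \<in> \<Omega>" "j \<in> \<Omega>"
  thus "cinner \<Omega> (b i) (b j) = (if i = j then 1 else 0)" using eb unfolding eigenbasis_def by auto
next
  fix i y assume i: "i \<in> \<Omega>" and y: "y \<in> \<Omega>"
  have ev: "(\<Sum>z\<in>\<Omega>. complex_of_real (M y z) * b i z) = complex_of_real (lam i) * b i y"
    using eb i y unfolding eigenbasis_def by auto
  have "(\<Sum>z\<in>\<Omega>. complex_of_real (c * M y z + (if y = z then s else 0)) * b i z)
     = complex_of_real c * (\<Sum>z\<in>\<Omega>. complex_of_real (M y z) * b i z) + (\<Sum>z\<in>\<Omega>. if y = z then complex_of_real s * b i z else 0)"
  proof -
    have "\<And>z. complex_of_real (c * M y z + (if y = z then s else 0)) * b i z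
       = complex_of_real c * (complex_of_real (M y z) * b i z) + (if y = z then complex_of_real s * b i z else 0)"
      by (simp add: algebra_simps)
    thus ?thesis by (simp add: sum.distrib sum_distrib_left)
  qed
  also have "\<dots> = complex_of_real (c * lam i + s) * b i y"
    using y ev fin by (simp add: algebra_simps)
  finally show "(\<Sum>z\<in>\<Omega>. complex_of_real (c * M y z + (if y = z then s else 0)) * b i z) = complex_of_real (c * lam i + s) * b i y" .
qed

definition rin :: "'a set \<Rightarrow> ('a \<Rightarrow> real) \<Rightarrow> ('a \<Rightarrow> real) \<Rightarrow> real" where
  "rin \<Omega> f g = (\<Sum>y\<in>\<Omega>. f y * g y)"

definition mv :: "'a set \<Rightarrow> ('a \<Rightarrow> 'a \<Rightarrow> real) \<Rightarrow> ('a \<Rightarrow> real) \<Rightarrow> 'a \<Rightarrow> real" where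
  "mv \<Omega> A f y = (\<Sum>z\<in>\<Omega>. A y z * f z)"

definition qf :: "'a set \<Rightarrow> ('a \<Rightarrow> 'a \<Rightarrow> real) \<Rightarrow> ('a \<Rightarrow> real) \<Rightarrow> real" where
  "qf \<Omega> A f = (\<Sum>y\<in>\<Omega>. \<Sum>z\<in>\<Omega>. f y * A y z * f z)"

lemma cont_eval: "continuous_on UNIV (\<lambda>f::'a \<Rightarrow> real. f y)"
  by simp

lemma cont_rin: "continuous_on UNIV (\<lambda>f. rin \<Omega> f (g f))" if "continuous_on UNIV g" for g :: "('a \<Rightarrow> real) \<Rightarrow> 'a \<Rightarrow> real"
  unfolding rin_def
  by (intro continuous_intros continuous_on_product_then_coordinatewise[OF that] cont_eval)

lemma cont_qf: "continuous_on S (\<lambda>f. qf \<Omega> A f)"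
  unfolding qf_def
  by (intro continuous_intros continuous_on_subset[OF cont_eval] subset_UNIV)

lemma compact_K:
  fixes v :: "nat \<Rightarrow> 'a \<Rightarrow> real"
  assumes fin: "finite \<Omega>"
  shows "compact {f. (\<forall>y. y \<notin> \<Omega> \<longrightarrow> f y = 0) \<and> rin \<Omega> f f = 1 \<and> (\<forall>j<k. rin \<Omega> f (v j) = 0)}"
    (is "compact ?K")
proof -
  define S where "S y = (if y \<in> \<Omega> then {-1..1::real} else {0})" for y
  have cP: "compact (Pi\<^sub>E UNIV S)"
  proof -
    have "compactin (product_topology (\<lambda>i. euclidean) UNIV) (Pi\<^sub>E UNIV S)"
      by (subst compactin_PiE) (auto simp: S_def)
    thus ?thesis by (simp add: euclidean_product_topology)
  qed
  have sub: "?K \<subseteq> Pi\<^sub>E UNIV S"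
  proof
    fix f assume f: "f \<in> ?K"
    have "f y \<in> S y" for y
    proof (cases "y \<in> \<Omega>")
      case True
      have "(f y)^2 \<le> (\<Sum>z\<in>\<Omega>. (f z)^2)"
        by (rule member_le_sum[OF True]) (auto simp: fin)
      also have "\<dots> = 1" using f by (simp add: rin_def power2_eq_square)
      finally have "\<bar>f y\<bar> \<le> 1" by (simp add: abs_square_le_1)
      thus ?thesis using True by (simp add: S_def abs_le_iff)
    next
      case False thus ?thesis using f by (simp add: S_def)
    qed
    thus "f \<in> Pi\<^sub>E UNIV S" by auto
  qed
  have cl: "closed ?K"
  proof -
    have c1: "closed {f::'a\<Rightarrow>real. \<forall>y. y \<notin> \<Omega> \<longrightarrow> f y = 0}"
    proof (intro closed_Collect_all)
      fix y show "closed {f::'a\<Rightarrow>real. y \<notin> \<Omega> \<longrightarrow> f y = 0}"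
        by (cases "y \<in> \<Omega>") (auto intro: closed_Collect_eq cont_eval)
    qed
    have c2: "closed {f. rin \<Omega> f f = 1}"
      by (intro closed_Collect_eq cont_rin continuous_on_id continuous_on_const)
    have c3: "closed {f. \<forall>j<k. rin \<Omega> f (v j) = 0}"
      by (intro closed_Collect_all closed_Collect_imp closed_Collect_eq cont_rin continuous_on_const open_Collect_const)
    show ?thesis using closed_Int[OF c1 closed_Int[OF c2 c3]]
      by (simp add: Collect_conj_eq[symmetric])
  qed
  show ?thesis by (rule compact_Int_closed[OF cP cl, simplified Int_absorb1[OF sub]])
qed

lemma rin_sym: "rin \<Omega> f g = rin \<Omega> g f" by (simp add: rin_def mult.commute)

lemma qf_mv: "qf \<Omega> A f = rin \<Omega> f (mv \<Omega> A f)"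
  by (simp add: qf_def rin_def mv_def sum_distrib_left mult.assoc)

lemma rin_lin1: "rin \<Omega> (\<lambda>y. f y + t * g y) h = rin \<Omega> f h + t * rin \<Omega> g h"
  by (simp add: rin_def sum.distrib sum_distrib_left algebra_simps)

lemma rin_lin2: "rin \<Omega> h (\<lambda>y. f y + t * g y) = rin \<Omega> h f + t * rin \<Omega> h g"
  by (simp add: rin_def sum.distrib sum_distrib_left algebra_simps)

lemma mv_lin: "mv \<Omega> A (\<lambda>y. f y + t * g y) = (\<lambda>y. mv \<Omega> A f y + t * mv \<Omega> A g y)"
  by (rule ext) (simp add: mv_def sum.distrib sum_distrib_left algebra_simps)

lemma mv_sym:
  assumes sym: "\<forall>y\<in>\<Omega>. \<forall>z\<in>\<Omega>. A y z = A z y"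
  shows "rin \<Omega> (mv \<Omega> A f) g = rin \<Omega> f (mv \<Omega> A g)"
proof -
  have "rin \<Omega> (mv \<Omega> A f) g = (\<Sum>y\<in>\<Omega>. \<Sum>z\<in>\<Omega>. A y z * f z * g y)"
    by (simp add: rin_def mv_def sum_distrib_right)
  also have "\<dots> = (\<Sum>z\<in>\<Omega>. \<Sum>y\<in>\<Omega>. A y z * f z * g y)" by (rule sum.swap)
  also have "\<dots> = (\<Sum>z\<in>\<Omega>. \<Sum>y\<in>\<Omega>. f z * (A z y * g y))"
    using sym by (intro sum.cong refl) (auto simp: mult_ac)
  also have "\<dots> = rin \<Omega> f (mv \<Omega> A g)" by (simp add: rin_def mv_def sum_distrib_left)
  finally show ?thesis .
qed

lemma qf_expand:
  assumes sym: "\<forall>y\<in>\<Omega>. \<forall>z\<in>\<Omega>. A y z = A z y"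
  shows "qf \<Omega> A (\<lambda>y. f y + t * g y) = qf \<Omega> A f + 2 * t * rin \<Omega> g (mv \<Omega> A f) + t^2 * qf \<Omega> A g"
proof -
  have e: "rin \<Omega> f (mv \<Omega> A g) = rin \<Omega> g (mv \<Omega> A f)"
    using mv_sym[OF sym, of f g] rin_sym by metis
  show ?thesis
    unfolding qf_mv mv_lin rin_lin1 rin_lin2 e by (simp add: algebra_simps power2_eq_square)
qed

lemma rin_expand:
  "rin \<Omega> (\<lambda>y. f y + t * g y) (\<lambda>y. f y + t * g y) = rin \<Omega> f f + 2 * t * rin \<Omega> f g + t^2 * rin \<Omega> g g"
  unfolding rin_lin1 rin_lin2 using rin_sym[of \<Omega> f g] by (simp add: algebra_simps power2_eq_square)

lemma quad_zero:
  fixes B c :: real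
  assumes "\<And>t. 2 * t * B + t^2 * c \<le> 0"
  shows "B = 0"
proof -
  define m where "m = \<bar>c\<bar> + 1"
  have m: "m > 0" unfolding m_def by simp
  have "2 * (B / m) * B + (B / m)^2 * c \<le> 0" by (rule assms)
  hence "(2 * (B / m) * B + (B / m)^2 * c) * m^2 \<le> 0"
    using m by (simp add: mult_nonpos_nonneg)
  hence "m^2 * (B^2 * (2 * m + c)) \<le> 0" using m by (simp add: field_simps power2_eq_square)
  hence "B^2 * (2 * m + c) \<le> 0" using m by (simp add: mult_le_0_iff)
  moreover have "2 * m + c > 0" unfolding m_def by (simp add: abs_if)
  ultimately have "B^2 \<le> 0" by (simp add: mult_le_0_iff)
  thus ?thesis by simp
qed

lemma max_deriv:
  assumes sym: "\<forall>y\<in>\<Omega>. \<forall>z\<in>\<Omega>. A y z = A z y"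
    and mx: "\<And>t::real. qf \<Omega> A (\<lambda>y. v y + t * w y) \<le> qf \<Omega> A v * rin \<Omega> (\<lambda>y. v y + t * w y) (\<lambda>y. v y + t * w y)"
    and n1: "rin \<Omega> v v = 1" and o: "rin \<Omega> v w = 0"
  shows "rin \<Omega> w (mv \<Omega> A v) = 0"
proof (rule quad_zero)
  fix t :: real
  have "qf \<Omega> A v + 2 * t * rin \<Omega> w (mv \<Omega> A v) + t^2 * qf \<Omega> A w \<le> qf \<Omega> A v * (1 + t^2 * rin \<Omega> w w)"
    using mx[of t] unfolding qf_expand[OF sym] rin_expand n1 o by simp
  thus "2 * t * rin \<Omega> w (mv \<Omega> A v) + t^2 * (qf \<Omega> A w - qf \<Omega> A v * rin \<Omega> w w) \<le> 0"
    by (simp add: algebra_simps)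
qed

lemma rin_div1: "rin \<Omega> (\<lambda>z. f z / c) g = rin \<Omega> f g / c"
  by (simp add: rin_def sum_divide_distrib)

lemma rin_div2: "rin \<Omega> g (\<lambda>z. f z / c) = rin \<Omega> g f / c"
  by (simp add: rin_def sum_divide_distrib)

lemma qf_div: "qf \<Omega> A (\<lambda>z. f z / c) = qf \<Omega> A f / c^2"
  by (simp add: qf_def sum_divide_distrib power2_eq_square)

lemma rin_nonneg: "rin \<Omega> f f \<ge> 0"
  by (simp add: rin_def sum_nonneg)

lemma rin_zero:
  assumes "finite \<Omega>" "rin \<Omega> f f = 0" "y \<in> \<Omega>" shows "f y = 0"
proof -
  have "\<forall>y\<in>\<Omega>. f y * f y = 0"
    using sum_nonneg_eq_0_iff[OF assms(1), of "\<lambda>y. f y * f y"] assms(2) by (simp add: rin_def)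
  thus ?thesis using assms(3) by simp
qed

lemma exists_orth_unit:
  fixes v :: "nat \<Rightarrow> 'a \<Rightarrow> real"
  assumes fin: "finite \<Omega>" and k: "k < card \<Omega>"
    and on: "\<forall>i<k. \<forall>j<k. rin \<Omega> (v i) (v j) = (if i = j then 1 else 0)"
  shows "\<exists>f. (\<forall>y. y \<notin> \<Omega> \<longrightarrow> f y = 0) \<and> rin \<Omega> f f = 1 \<and> (\<forall>j<k. rin \<Omega> f (v j) = 0)"
proof -
  define F where "F y z = (if z \<in> \<Omega> then (if z = y then 1 else 0) - (\<Sum>i<k. v i y * v i z) else 0)" for y z
  have orthF: "rin \<Omega> (F y) (v j) = 0" if y: "y \<in> \<Omega>" and j: "j < k" for y j
  proof -
    have "rin \<Omega> (F y) (v j) = (\<Sum>z\<in>\<Omega>. (if z = y then v j z else 0)) - (\<Sum>z\<in>\<Omega>. \<Sum>i<k. v i y * (v i z * v j z))"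
    proof -
      have "\<And>z. z \<in> \<Omega> \<Longrightarrow> F y z * v j z = (if z = y then v j z else 0) - (\<Sum>i<k. v i y * (v i z * v j z))"
        by (auto simp: F_def algebra_simps sum_distrib_left sum_distrib_right)
      hence "rin \<Omega> (F y) (v j) = (\<Sum>z\<in>\<Omega>. (if z = y then v j z else 0) - (\<Sum>i<k. v i y * (v i z * v j z)))"
        unfolding rin_def by (rule sum.cong[OF refl])
      thus ?thesis by (simp add: sum_subtractf)
    qed
    also have "\<dots> = v j y - (\<Sum>i<k. \<Sum>z\<in>\<Omega>. v i y * (v i z * v j z))"
      using fin y by (simp add: sum.swap[of _ \<Omega>])
    also have "\<dots> = v j y - (\<Sum>i<k. v i y * rin \<Omega> (v i) (v j))"
      by (simp add: rin_def sum_distrib_left)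
    also have "\<dots> = v j y - (\<Sum>i<k. if i = j then v i y else 0)"
      using on j by (intro arg_cong2[where f=minus] refl sum.cong) auto
    also have "\<dots> = 0" using j by simp
    finally show ?thesis .
  qed
  have "\<exists>y\<in>\<Omega>. rin \<Omega> (F y) (F y) \<noteq> 0"
  proof (rule ccontr)
    assume "\<not> ?thesis"
    hence z: "\<forall>y\<in>\<Omega>. rin \<Omega> (F y) (F y) = 0" by auto
    have one: "(\<Sum>i<k. (v i y)^2) = 1" if y: "y \<in> \<Omega>" for y
    proof -
      have "F y y = 0" using rin_zero[OF fin _ y] z y by blast
      thus ?thesis using y by (simp add: F_def power2_eq_square)
    qed
    have "real (card \<Omega>) = (\<Sum>y\<in>\<Omega>. \<Sum>i<k. (v i y)^2)" using one by simp
    also have "\<dots> = (\<Sum>i<k. rin \<Omega> (v i) (v i))"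
      by (simp add: rin_def sum.swap[of _ \<Omega>] power2_eq_square)
    also have "\<dots> = real k" using on by simp
    finally show False using k by simp
  qed
  then obtain y where y: "y \<in> \<Omega>" and r0: "rin \<Omega> (F y) (F y) \<noteq> 0" by blast
  define r where "r = rin \<Omega> (F y) (F y)"
  have rpos: "r > 0" using r0 rin_nonneg[of \<Omega> "F y"] unfolding r_def by linarith
  define f where "f z = F y z / sqrt r" for z
  show ?thesis
  proof (intro exI[of _ f] conjI allI impI)
    fix z assume "z \<notin> \<Omega>" thus "f z = 0" by (simp add: f_def F_def)
  next
    show "rin \<Omega> f f = 1" unfolding f_def[abs_def] rin_div1 rin_div2
      using rpos by (simp add: r_def[symmetric] real_sqrt_mult[symmetric])
  next
    fix j assume "j < k" thus "rin \<Omega> f (v j) = 0" unfolding f_def[abs_def] rin_div1 using orthF[OF y] by simp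
  qed
qed

lemma step_eig:
  fixes v :: "nat \<Rightarrow> 'a \<Rightarrow> real"
  assumes fin: "finite \<Omega>" and sym: "\<forall>y\<in>\<Omega>. \<forall>z\<in>\<Omega>. A y z = A z y" and k: "k < card \<Omega>"
    and on: "\<forall>i<k. \<forall>j<k. rin \<Omega> (v i) (v j) = (if i = j then 1 else 0)"
    and ev: "\<forall>i<k. \<forall>y\<in>\<Omega>. mv \<Omega> A (v i) y = lam i * v i y"
  shows "\<exists>u l. rin \<Omega> u u = 1 \<and> (\<forall>j<k. rin \<Omega> u (v j) = 0) \<and> (\<forall>y\<in>\<Omega>. mv \<Omega> A u y = l * u y)"
proof -
  define K where "K = {f. (\<forall>y. y \<notin> \<Omega> \<longrightarrow> f y = 0) \<and> rin \<Omega> f f = 1 \<and> (\<forall>j<k. rin \<Omega> f (v j) = 0)}"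
  have cK: "compact K" unfolding K_def by (rule compact_K[OF fin])
  have neK: "K \<noteq> {}" unfolding K_def using exists_orth_unit[OF fin k on] by blast
  obtain u where uK: "u \<in> K" and umax: "\<And>f. f \<in> K \<Longrightarrow> qf \<Omega> A f \<le> qf \<Omega> A u"
    using continuous_attains_sup[OF cK neK cont_qf] by blast
  have u0: "\<And>y. y \<notin> \<Omega> \<Longrightarrow> u y = 0" and u1: "rin \<Omega> u u = 1" and uo: "\<And>j. j < k \<Longrightarrow> rin \<Omega> u (v j) = 0"
    using uK unfolding K_def by auto
  define a where "a = qf \<Omega> A u"
  have Auo: "rin \<Omega> (mv \<Omega> A u) (v j) = 0" if j: "j < k" for j
  proof -
    have "rin \<Omega> (mv \<Omega> A u) (v j) = rin \<Omega> u (mv \<Omega> A (v j))" by (rule mv_sym[OF sym])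
    also have "\<dots> = rin \<Omega> u (\<lambda>y. lam j * v j y)"
      unfolding rin_def using ev j by (intro sum.cong refl) auto
    also have "\<dots> = lam j * rin \<Omega> u (v j)" by (simp add: rin_def sum_distrib_left mult_ac)
    finally show ?thesis using uo[OF j] by simp
  qed
  define w where "w y = (if y \<in> \<Omega> then mv \<Omega> A u y - a * u y else 0)" for y
  have rw: "rin \<Omega> w g = rin \<Omega> (mv \<Omega> A u) g - a * rin \<Omega> u g" for g
  proof -
    have "rin \<Omega> w g = (\<Sum>y\<in>\<Omega>. mv \<Omega> A u y * g y - a * (u y * g y))"
      unfolding rin_def w_def by (rule sum.cong[OF refl]) (simp add: algebra_simps)
    thus ?thesis by (simp add: rin_def sum_subtractf sum_distrib_left)
  qed
  have wo: "rin \<Omega> w (v j) = 0" if "j < k" for j using rw Auo[OF that] uo[OF that] by simp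
  have uw: "rin \<Omega> u w = 0"
  proof -
    have "rin \<Omega> u w = rin \<Omega> w u" by (rule rin_sym)
    also have "\<dots> = rin \<Omega> (mv \<Omega> A u) u - a * rin \<Omega> u u" by (rule rw)
    also have "rin \<Omega> (mv \<Omega> A u) u = a" unfolding a_def qf_mv by (rule rin_sym)
    finally show ?thesis using u1 by simp
  qed
  have w0: "\<And>y. y \<notin> \<Omega> \<Longrightarrow> w y = 0" by (simp add: w_def)
  have mx: "qf \<Omega> A (\<lambda>y. u y + t * w y) \<le> qf \<Omega> A u * rin \<Omega> (\<lambda>y. u y + t * w y) (\<lambda>y. u y + t * w y)" for t
  proof -
    define h where "h y = u y + t * w y" for y
    define r where "r = rin \<Omega> h h"
    have r: "r = 1 + t^2 * rin \<Omega> w w" unfolding r_def h_def rin_expand u1 uw by simp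
    have rpos: "r > 0" using r rin_nonneg[of \<Omega> w] by (simp add: add_pos_nonneg)
    define h' where "h' y = h y / sqrt r" for y
    have "h' \<in> K" unfolding K_def
    proof (intro CollectI conjI allI impI)
      fix y assume "y \<notin> \<Omega>" thus "h' y = 0" by (simp add: h'_def h_def u0 w0)
    next
      show "rin \<Omega> h' h' = 1" unfolding h'_def[abs_def] rin_div1 rin_div2
        using rpos by (simp add: r_def[symmetric] real_sqrt_mult[symmetric])
    next
      fix j assume j: "j < k"
      show "rin \<Omega> h' (v j) = 0" unfolding h'_def[abs_def] rin_div1 h_def[abs_def] rin_lin1
        using uo[OF j] wo[OF j] by simp
    qed
    hence "qf \<Omega> A h' \<le> qf \<Omega> A u" by (rule umax)
    hence "qf \<Omega> A h / r \<le> qf \<Omega> A u" unfolding h'_def[abs_def] qf_div using rpos by simp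
    hence "qf \<Omega> A h \<le> qf \<Omega> A u * r" using rpos by (simp add: divide_le_eq)
    thus ?thesis unfolding h_def r_def .
  qed
  have wAu: "rin \<Omega> w (mv \<Omega> A u) = 0"
    by (rule max_deriv[OF sym mx u1]) (use uw in auto)
  have "rin \<Omega> w w = rin \<Omega> w (mv \<Omega> A u) - a * rin \<Omega> w u"
    using rw[of w] mv_sym[OF sym, of u w] rin_sym by metis
  moreover have "rin \<Omega> w u = 0" using uw rin_sym[of \<Omega> u w] by simp
  ultimately have ww: "rin \<Omega> w w = 0" using wAu by simp
  have "\<forall>y\<in>\<Omega>. mv \<Omega> A u y = a * u y"
  proof
    fix y assume y: "y \<in> \<Omega>"
    have "w y = 0" by (rule rin_zero[OF fin ww y])
    thus "mv \<Omega> A u y = a * u y" using y by (simp add: w_def)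
  qed
  thus ?thesis using u1 uo by blast
qed

lemma spectral_k:
  assumes fin: "finite \<Omega>" and sym: "\<forall>y\<in>\<Omega>. \<forall>z\<in>\<Omega>. A y z = A z y"
  shows "k \<le> card \<Omega> \<Longrightarrow> \<exists>v lam. (\<forall>i<k. \<forall>j<k. rin \<Omega> (v i) (v j) = (if i = j then 1 else 0))
              \<and> (\<forall>i<k. \<forall>y\<in>\<Omega>. mv \<Omega> A (v i) y = lam i * v i y)"
proof (induction k)
  case 0 show ?case by simp
next
  case (Suc k)
  then obtain v lam where on: "\<forall>i<k. \<forall>j<k. rin \<Omega> (v i) (v j) = (if i = j then 1 else 0)"
    and ev: "\<forall>i<k. \<forall>y\<in>\<Omega>. mv \<Omega> A (v i) y = lam i * v i y" by auto
  from step_eig[OF fin sym _ on ev] Suc.prems obtain u l where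
    u1: "rin \<Omega> u u = 1" and uo: "\<forall>j<k. rin \<Omega> u (v j) = 0" and ue: "\<forall>y\<in>\<Omega>. mv \<Omega> A u y = l * u y"
    by auto
  have uo': "\<forall>j<k. rin \<Omega> (v j) u = 0" using uo rin_sym[of \<Omega> _ u] by metis
  define v' where "v' = v(k := u)"
  define lam' where "lam' = lam(k := l)"
  show ?case
  proof (intro exI[of _ v'] exI[of _ lam'] conjI allI impI ballI)
    fix i j assume i: "i < Suc k" and j: "j < Suc k"
    show "rin \<Omega> (v' i) (v' j) = (if i = j then 1 else 0)"
      using i j on uo uo' u1 unfolding v'_def
      by (cases "i = k"; cases "j = k") (auto simp: less_Suc_eq)
  next
    fix i y assume i: "i < Suc k" and y: "y \<in> \<Omega>"
    show "mv \<Omega> A (v' i) y = lam' i * v' i y"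
      using i y ev ue unfolding v'_def lam'_def by (cases "i = k") (auto simp: less_Suc_eq)
  qed
qed

lemma spectral_exists:
  fixes A :: "'a \<Rightarrow> 'a \<Rightarrow> real"
  assumes fin: "finite \<Omega>" and sym: "\<forall>y\<in>\<Omega>. \<forall>z\<in>\<Omega>. A y z = A z y"
  shows "\<exists>b lam. eigenbasis \<Omega> (\<lambda>y z. complex_of_real (A y z)) b lam"
proof -
  obtain v lam where on: "\<forall>i<card \<Omega>. \<forall>j<card \<Omega>. rin \<Omega> (v i) (v j) = (if i = j then 1 else 0)"
    and ev: "\<forall>i<card \<Omega>. \<forall>y\<in>\<Omega>. mv \<Omega> A (v i) y = lam i * v i y"
    using spectral_k[OF fin sym order_refl] by blast
  obtain h where h: "bij_betw h {0..<card \<Omega>} \<Omega>" using ex_bij_betw_nat_finite[OF fin] by blast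
  define g where "g = the_inv_into {0..<card \<Omega>} h"
  have g: "bij_betw g \<Omega> {0..<card \<Omega>}" unfolding g_def by (rule bij_betw_the_inv_into[OF h])
  have gl: "i \<in> \<Omega> \<Longrightarrow> g i < card \<Omega>" for i using g by (auto simp: bij_betw_def)
  have ginj: "i \<in> \<Omega> \<Longrightarrow> j \<in> \<Omega> \<Longrightarrow> g i = g j \<longleftrightarrow> i = j" for i j
    using g by (auto simp: bij_betw_def inj_on_def)
  define b where "b i y = complex_of_real (v (g i) y)" for i y
  define lam' where "lam' i = lam (g i)" for i
  have "eigenbasis \<Omega> (\<lambda>y z. complex_of_real (A y z)) b lam'"
    unfolding eigenbasis_def
  proof (intro conjI ballI)
    fix i j assume i: "i \<in> \<Omega>" and j: "j \<in> \<Omega>"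
    have "cinner \<Omega> (b i) (b j) = complex_of_real (rin \<Omega> (v (g i)) (v (g j)))"
      by (simp add: cinner_def rin_def b_def)
    thus "cinner \<Omega> (b i) (b j) = (if i = j then 1 else 0)"
      using on gl[OF i] gl[OF j] ginj[OF i j] by simp
  next
    fix i y assume i: "i \<in> \<Omega>" and y: "y \<in> \<Omega>"
    have "(\<Sum>z\<in>\<Omega>. complex_of_real (A y z) * b i z) = complex_of_real (mv \<Omega> A (v (g i)) y)"
      by (simp add: mv_def b_def)
    also have "\<dots> = complex_of_real (lam' i) * b i y"
      using ev gl[OF i] y by (simp add: lam'_def b_def)
    finally show "(\<Sum>z\<in>\<Omega>. complex_of_real (A y z) * b i z) = complex_of_real (lam' i) * b i y" .
  qed
  thus ?thesis by blast
qed

lemma torus_finite: "finite (torus L d)"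
proof -
  have "torus L d \<subseteq> {xs. set xs \<subseteq> {0..<int L} \<and> length xs = d}"
    unfolding torus_def by (auto simp: in_set_conv_nth)
  thus ?thesis by (rule finite_subset) (rule finite_lists_length_eq, simp)
qed

lemma cdist_sym: "cdist L a b = cdist L b a" by (simp add: cdist_def min.commute)

lemma tdist1_sym: "tdist1 L d x y = tdist1 L d y x" by (simp add: tdist1_def cdist_sym)

lemma hop_sym: "hop L d x y = hop L d y x" by (simp add: hop_def tdist1_sym)

lemma lap_sym: "lap L d x y = lap L d y x" by (simp add: lap_def hop_sym)

lemma cdist_nonneg: "L > 0 \<Longrightarrow> cdist L a b \<ge> 0" by (simp add: cdist_def)

lemma mod0_eq: "(L::int) > 0 \<Longrightarrow> 0 \<le> a \<Longrightarrow> a < L \<Longrightarrow> 0 \<le> b \<Longrightarrow> b < L \<Longrightarrow> (a - b) mod L = 0 \<Longrightarrow> a = b"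
  by (metis add.commute add_diff_cancel_right' diff_0_right diff_add_cancel
    mod_diff_right_eq mod_pos_pos_trivial)

lemma mod1_eq: "(L::int) > 0 \<Longrightarrow> 0 \<le> b \<Longrightarrow> b < L \<Longrightarrow> (a - b) mod L = 1 \<Longrightarrow> b = (a - 1) mod L"
  by (metis cancel_ab_semigroup_add_class.diff_right_commute eq_iff_diff_eq_0 mod_diff_right_eq mod_pos_pos_trivial)

lemma mod1_eq': "(L::int) > 0 \<Longrightarrow> 0 \<le> b \<Longrightarrow> b < L \<Longrightarrow> (b - a) mod L = 1 \<Longrightarrow> b = (a + 1) mod L"
  by (metis add.commute diff_add_cancel mod_add_right_eq mod_pos_pos_trivial)

lemma cdist0:
  assumes "L > 0" "0 \<le> a" "a < int L" "0 \<le> b" "b < int L" "cdist L a b = 0"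
  shows "a = b"
proof -
  have "(a - b) mod int L = 0 \<or> (b - a) mod int L = 0" using assms(6) unfolding cdist_def
    by (metis min_def)
  thus ?thesis using mod0_eq[of "int L" a b] mod0_eq[of "int L" b a] assms by auto
qed

lemma cdist1:
  assumes "L > 0" "0 \<le> b" "b < int L" "cdist L a b = 1"
  shows "b = (a + 1) mod int L \<or> b = (a - 1) mod int L"
proof -
  have "(a - b) mod int L = 1 \<or> (b - a) mod int L = 1" using assms(4) unfolding cdist_def
    by (metis min_def)
  thus ?thesis using mod1_eq[of "int L" b a] mod1_eq'[of "int L" b a] assms by auto
qed

lemma nbr_form:
  assumes L: "L > 0" and y: "y \<in> torus L d" and z: "z \<in> torus L d" and t: "tdist1 L d y z = 1"
  shows "\<exists>i<d. z = y[i := (y!i + 1) mod int L] \<or> z = y[i := (y!i - 1) mod int L]"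
proof -
  define c where "c i = cdist L (y!i) (z!i)" for i
  have c0: "c i \<ge> 0" for i unfolding c_def using cdist_nonneg[OF L] by simp
  have s: "(\<Sum>i<d. c i) = 1" using t unfolding tdist1_def c_def .
  have "\<exists>i<d. c i \<noteq> 0"
  proof (rule ccontr)
    assume "\<not> ?thesis" hence "(\<Sum>i<d. c i) = 0" by simp
    thus False using s by simp
  qed
  then obtain i where i: "i < d" and ci: "c i \<noteq> 0" by blast
  have split: "(\<Sum>j<d. c j) = c i + (\<Sum>j\<in>{..<d} - {i}. c j)"
    using i by (simp add: sum.remove)
  have rest0: "(\<Sum>j\<in>{..<d} - {i}. c j) \<ge> 0" by (simp add: sum_nonneg c0)
  have ci1: "c i = 1" using split s rest0 ci c0[of i] by linarith
  have "(\<Sum>j\<in>{..<d} - {i}. c j) = 0" using split s ci1 by simp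
  hence others: "\<forall>j\<in>{..<d} - {i}. c j = 0"
    using sum_nonneg_eq_0_iff[of "{..<d} - {i}" c] c0 by auto
  have ly: "length y = d" and lz: "length z = d" using y z by (auto simp: torus_def)
  have yr: "\<And>j. j < d \<Longrightarrow> 0 \<le> y!j \<and> y!j < int L" using y by (auto simp: torus_def)
  have zr: "\<And>j. j < d \<Longrightarrow> 0 \<le> z!j \<and> z!j < int L" using z by (auto simp: torus_def)
  have eqj: "z!j = y!j" if "j < d" "j \<noteq> i" for j
    using cdist0[OF L _ _ _ _ others[rule_format, of j, unfolded c_def]] yr[OF that(1)] zr[OF that(1)] that
    by auto
  have zi: "z!i = (y!i + 1) mod int L \<or> z!i = (y!i - 1) mod int L"
    using cdist1[OF L _ _ ci1[unfolded c_def]] zr[OF i] by auto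
  have "z = y[i := z!i]"
  proof (rule nth_equalityI)
    show "length z = length (y[i := z!i])" by (simp add: ly lz)
  next
    fix j assume j: "j < length z"
    show "z!j = y[i := z!i] ! j"
      using j i ly lz eqj[of j] by (cases "j = i") auto
  qed
  thus ?thesis using zi i by auto
qed

lemma degree_bound:
  assumes L: "L > 0" and Om: "\<Omega> \<subseteq> torus L d" and y: "y \<in> torus L d"
  shows "(\<Sum>z\<in>\<Omega>. hop L d y z) \<le> 2 * real d"
proof -
  have fin: "finite \<Omega>" using Om torus_finite finite_subset by blast
  define N where "N = {z\<in>\<Omega>. tdist1 L d y z = 1}"
  have "(\<Sum>z\<in>\<Omega>. hop L d y z) = (\<Sum>z\<in>N. 1)"
    unfolding N_def hop_def sum.inter_filter[OF fin] by (rule refl)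
  also have "\<dots> = real (card N)" by simp
  also have "card N \<le> card (\<Union>i<d. {y[i := (y!i + 1) mod int L], y[i := (y!i - 1) mod int L]})"
  proof (rule card_mono)
    show "finite (\<Union>i<d. {y[i := (y!i + 1) mod int L], y[i := (y!i - 1) mod int L]})" by simp
    show "N \<subseteq> (\<Union>i<d. {y[i := (y!i + 1) mod int L], y[i := (y!i - 1) mod int L]})"
      unfolding N_def using nbr_form[OF L y] Om by blast
  qed
  also have "\<dots> \<le> (\<Sum>i<d. card {y[i := (y!i + 1) mod int L], y[i := (y!i - 1) mod int L]})"
    by (rule card_UN_le) simp
  also have "\<dots> \<le> (\<Sum>i<(d::nat). 2)"
    by (rule sum_mono) (simp add: card_insert_if)
  finally show ?thesis by simp
qed

lemma eig_lower:
  fixes V :: "int list \<Rightarrow> real"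
  assumes L: "L > 0" and Om: "\<Omega> \<subseteq> torus L d" and Vb: "\<forall>y\<in>\<Omega>. V y \<le> \<mu>"
    and eb: "eigenbasis \<Omega> (\<lambda>y z. complex_of_real (- lap L d y z - (if y = z then V y else 0))) b lam"
    and i: "i \<in> \<Omega>"
  shows "lam i \<ge> - \<mu>"
proof -
  have fin: "finite \<Omega>" using Om torus_finite finite_subset by blast
  have ne: "\<Omega> \<noteq> {}" using i by auto
  define m where "m = Max ((\<lambda>z. cmod (b i z)) ` \<Omega>)"
  have "m \<in> (\<lambda>z. cmod (b i z)) ` \<Omega>" unfolding m_def using fin ne by (intro Max_in) auto
  then obtain y where y: "y \<in> \<Omega>" and my: "cmod (b i y) = m" by auto
  have mge: "\<And>z. z \<in> \<Omega> \<Longrightarrow> cmod (b i z) \<le> m" unfolding m_def using fin by (intro Max_ge) auto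
  have mpos: "m > 0"
  proof (rule ccontr)
    assume "\<not> m > 0"
    hence "\<And>z. z \<in> \<Omega> \<Longrightarrow> cmod (b i z) = 0" using mge by (meson norm_ge_zero order.trans antisym not_less)
    hence "(\<Sum>z\<in>\<Omega>. (cmod (b i z))^2) = 0" by simp
    thus False using eigenbasis_norm1[OF eb i] by simp
  qed
  have ev: "(\<Sum>z\<in>\<Omega>. complex_of_real (- lap L d y z - (if y = z then V y else 0)) * b i z) = complex_of_real (lam i) * b i y"
    using eb i y unfolding eigenbasis_def by auto
  have pw: "complex_of_real (- lap L d y z - (if y = z then V y else 0)) * b i z
      = (if z = y then complex_of_real (2 * real d - V y) * b i z else 0) - complex_of_real (hop L d y z) * b i z" for z
    by (auto simp: lap_def algebra_simps)
  have "(\<Sum>z\<in>\<Omega>. complex_of_real (- lap L d y z - (if y = z then V y else 0)) * b i z)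
      = complex_of_real (2 * real d - V y) * b i y - (\<Sum>z\<in>\<Omega>. complex_of_real (hop L d y z) * b i z)"
    unfolding pw using fin y by (simp add: sum_subtractf)
  hence eq: "complex_of_real (lam i - 2 * real d + V y) * b i y = - (\<Sum>z\<in>\<Omega>. complex_of_real (hop L d y z) * b i z)"
    using ev by (simp add: algebra_simps)
  have hop0: "\<And>z. hop L d y z \<ge> 0" by (simp add: hop_def)
  have "\<bar>lam i - 2 * real d + V y\<bar> * m = cmod (complex_of_real (lam i - 2 * real d + V y) * b i y)"
    by (simp only: norm_mult norm_of_real my)
  also have "\<dots> = cmod (\<Sum>z\<in>\<Omega>. complex_of_real (hop L d y z) * b i z)" using eq by simp
  also have "\<dots> \<le> (\<Sum>z\<in>\<Omega>. cmod (complex_of_real (hop L d y z) * b i z))" by (rule norm_sum)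
  also have "\<dots> = (\<Sum>z\<in>\<Omega>. hop L d y z * cmod (b i z))" using hop0 by (simp add: norm_mult)
  also have "\<dots> \<le> (\<Sum>z\<in>\<Omega>. hop L d y z * m)"
    by (rule sum_mono) (simp add: hop0 mge mult_left_mono)
  also have "\<dots> = (\<Sum>z\<in>\<Omega>. hop L d y z) * m" by (simp add: sum_distrib_right)
  also have "\<dots> \<le> 2 * real d * m"
    using degree_bound[OF L Om] Om y mpos by (intro mult_right_mono) auto
  finally have "\<bar>lam i - 2 * real d + V y\<bar> \<le> 2 * real d" using mpos by simp
  thus ?thesis using Vb y by auto
qed

lemma pow_mono:
  assumes "\<forall>y\<in>\<Omega>. \<forall>z\<in>\<Omega>. 0 \<le> A y z \<and> A y z \<le> B y z"
  shows "\<forall>y\<in>\<Omega>. \<forall>z\<in>\<Omega>. 0 \<le> mat_pow \<Omega> A n y z \<and> mat_pow \<Omega> A n y z \<le> (mat_pow \<Omega> B n y z :: real)"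
proof (induction n)
  case 0 show ?case by simp
next
  case (Suc n)
  show ?case
  proof (intro ballI conjI)
    fix y z assume y: "y \<in> \<Omega>" and z: "z \<in> \<Omega>"
    show "0 \<le> mat_pow \<Omega> A (Suc n) y z"
      using assms Suc.IH y z by (auto simp: mat_mult_def intro!: sum_nonneg)
    show "mat_pow \<Omega> A (Suc n) y z \<le> mat_pow \<Omega> B (Suc n) y z"
      unfolding mat_pow.simps mat_mult_def
      using assms Suc.IH y z by (intro sum_mono mult_mono) (auto intro: order_trans)
  qed
qed

theorem mainTheorem8:
  fixes L d :: nat and \<mu> \<beta> :: real and \<Omega> :: "int list set"
    and V :: "int list \<Rightarrow> real" and x :: "int list"
  assumes "L > 0"
    and "\<mu> > 0"
    and "\<Omega> \<subseteq> torus L d"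
    and "\<forall>y\<in>\<Omega>. \<mu> / 2 \<le> V y \<and> V y \<le> \<mu>"
    and "x \<in> \<Omega>"
    and "\<beta> > 0"
  shows "Re (neg_spectral_proj \<Omega>
             (\<lambda>y z. complex_of_real (- lap L d y z - (if y = z then V y else 0))) x x)
         \<ge> exp (- \<beta> * \<mu> / 2) * (mat_exp \<Omega> (\<lambda>y z. \<beta> * lap L d y z) x x - exp (- \<beta> * \<mu> / 2))"
proof -
  note L = assms(1) and mu = assms(2) and Om = assms(3) and Vb = assms(4) and x = assms(5) and be = assms(6)
  have fin: "finite \<Omega>" using Om torus_finite finite_subset by blast
  define Hr where "Hr y z = - lap L d y z - (if y = z then V y else 0)" for y z
  have Hsym: "\<forall>y\<in>\<Omega>. \<forall>z\<in>\<Omega>. Hr y z = Hr z y" unfolding Hr_def using lap_sym by auto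
  define P where "P = (\<lambda>(b, lam). eigenbasis \<Omega> (\<lambda>y z. complex_of_real (- lap L d y z - (if y = z then V y else 0))) b lam)"
  have exP: "\<exists>p. P p"
    using spectral_exists[OF fin Hsym] unfolding P_def Hr_def by auto
  obtain b lam where bl: "(SOME p. P p) = (b, lam)" by (cases "SOME p. P p") auto
  have eb: "eigenbasis \<Omega> (\<lambda>y z. complex_of_real (- lap L d y z - (if y = z then V y else 0))) b lam"
  proof -
    have "P (SOME p. P p)" by (rule someI_ex[OF exP])
    hence "P (b, lam)" by (simp only: bl)
    thus ?thesis unfolding P_def by (simp only: prod.case)
  qed
  define W where "W i = (cmod (b i x))^2" for i
  have W0: "\<And>i. W i \<ge> 0" unfolding W_def by simp
  have W1: "(\<Sum>i\<in>\<Omega>. W i) = 1" unfolding W_def by (rule eigenbasis_complete(1)[OF fin eb x])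
  define rho where "rho = (\<Sum>i\<in>{i\<in>\<Omega>. lam i < 0}. W i)"
  have rho_eq: "Re (neg_spectral_proj \<Omega> (\<lambda>y z. complex_of_real (- lap L d y z - (if y = z then V y else 0))) x x) = rho"
  proof -
    have "neg_spectral_proj \<Omega> (\<lambda>y z. complex_of_real (- lap L d y z - (if y = z then V y else 0))) x x
        = (\<Sum>i\<in>{i\<in>\<Omega>. lam i < 0}. b i x * cnj (b i x))"
      unfolding neg_spectral_proj_def using bl unfolding P_def by simp
    also have "\<dots> = (\<Sum>i\<in>{i\<in>\<Omega>. lam i < 0}. complex_of_real (W i))"
      unfolding W_def by (simp only: complex_norm_square)
    finally show ?thesis unfolding rho_def by simp
  qed
  have lam_lb: "\<And>i. i \<in> \<Omega> \<Longrightarrow> lam i \<ge> - \<mu>"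
    using eig_lower[OF L Om _ eb] Vb by auto
  have M0sym: "\<forall>y\<in>\<Omega>. \<forall>z\<in>\<Omega>. \<beta> * lap L d y z = \<beta> * lap L d z y" using lap_sym by auto
  obtain b0 lam0 where eb0: "eigenbasis \<Omega> (\<lambda>y z. complex_of_real (\<beta> * lap L d y z)) b0 lam0"
    using spectral_exists[OF fin M0sym] by blast
  define s1 where "s1 = \<beta> * (2 * real d + \<mu> / 2)"
  define s2 where "s2 = \<beta> * (2 * real d)"
  define A1 where "A1 y z = 1 * (\<beta> * lap L d y z) + (if y = z then s1 else 0)" for y z
  define A2 where "A2 y z = (- \<beta>) * Hr y z + (if y = z then s2 else 0)" for y z
  have eb1: "eigenbasis \<Omega> (\<lambda>y z. complex_of_real (A1 y z)) b0 (\<lambda>i. 1 * lam0 i + s1)"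
    unfolding A1_def by (rule eigenbasis_shift[OF fin eb0])
  have ebH: "eigenbasis \<Omega> (\<lambda>y z. complex_of_real (Hr y z)) b lam" using eb unfolding Hr_def .
  have eb2: "eigenbasis \<Omega> (\<lambda>y z. complex_of_real (A2 y z)) b (\<lambda>i. (- \<beta>) * lam i + s2)"
    unfolding A2_def by (rule eigenbasis_shift[OF fin ebH])
  define E where "E = mat_exp \<Omega> (\<lambda>y z. \<beta> * lap L d y z) x x"
  have E_eq: "E = (\<Sum>i\<in>\<Omega>. exp (lam0 i) * (cmod (b0 i x))^2)"
    unfolding E_def by (rule eigen_exp[OF fin eb0 x])
  have S1: "(\<lambda>n. mat_pow \<Omega> A1 n x x / fact n) sums (\<Sum>i\<in>\<Omega>. exp (1 * lam0 i + s1) * (cmod (b0 i x))^2)"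
    by (rule eigen_exp_sums[OF fin eb1 x])
  have S2: "(\<lambda>n. mat_pow \<Omega> A2 n x x / fact n) sums (\<Sum>i\<in>\<Omega>. exp ((- \<beta>) * lam i + s2) * W i)"
    unfolding W_def by (rule eigen_exp_sums[OF fin eb2 x])
  have ent: "\<forall>y\<in>\<Omega>. \<forall>z\<in>\<Omega>. 0 \<le> A1 y z \<and> A1 y z \<le> A2 y z"
  proof (intro ballI)
    fix y z assume y: "y \<in> \<Omega>" and z: "z \<in> \<Omega>"
    have h0: "hop L d y z \<ge> 0" by (simp add: hop_def)
    have a1: "A1 y z = \<beta> * hop L d y z + (if y = z then \<beta> * \<mu> / 2 else 0)"
      unfolding A1_def s1_def lap_def by (simp add: algebra_simps)
    have a2: "A2 y z = \<beta> * hop L d y z + (if y = z then \<beta> * V y else 0)"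
      unfolding A2_def s2_def Hr_def lap_def by (simp add: algebra_simps)
    show "0 \<le> A1 y z \<and> A1 y z \<le> A2 y z"
      unfolding a1 a2 using h0 be mu Vb y by (auto intro: mult_left_mono)
  qed
  have "(\<Sum>i\<in>\<Omega>. exp (1 * lam0 i + s1) * (cmod (b0 i x))^2) \<le> (\<Sum>i\<in>\<Omega>. exp ((- \<beta>) * lam i + s2) * W i)"
  proof (rule sums_le[OF _ S1 S2])
    fix n
    show "mat_pow \<Omega> A1 n x x / fact n \<le> mat_pow \<Omega> A2 n x x / fact n"
      using pow_mono[OF ent, of n] x by (intro divide_right_mono) auto
  qed
  also have "(\<Sum>i\<in>\<Omega>. exp (1 * lam0 i + s1) * (cmod (b0 i x))^2) = exp s1 * E"
    unfolding E_eq by (simp add: sum_distrib_left exp_add mult_ac)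
  also have "(\<Sum>i\<in>\<Omega>. exp ((- \<beta>) * lam i + s2) * W i) = exp s2 * (\<Sum>i\<in>\<Omega>. exp (- \<beta> * lam i) * W i)"
  proof -
    have e: "\<And>i. exp ((- \<beta>) * lam i + s2) * W i = exp s2 * (exp (- \<beta> * lam i) * W i)"
      by (subst exp_add) (simp add: mult_ac)
    show ?thesis unfolding sum_distrib_left by (rule sum.cong[OF refl]) (rule e)
  qed
  finally have c1: "exp s1 * E \<le> exp s2 * (\<Sum>i\<in>\<Omega>. exp (- \<beta> * lam i) * W i)" .
  have "(\<Sum>i\<in>\<Omega>. exp (- \<beta> * lam i) * W i) \<le> (\<Sum>i\<in>\<Omega>. exp (\<beta> * \<mu>) * (if lam i < 0 then W i else 0) + W i)"
  proof (rule sum_mono)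
    fix i assume i: "i \<in> \<Omega>"
    show "exp (- \<beta> * lam i) * W i \<le> exp (\<beta> * \<mu>) * (if lam i < 0 then W i else 0) + W i"
    proof (cases "lam i < 0")
      case True
      have "exp (- \<beta> * lam i) \<le> exp (\<beta> * \<mu>)"
      proof -
        have "\<beta> * (- lam i) \<le> \<beta> * \<mu>" using lam_lb[OF i] be by (intro mult_left_mono) auto
        thus ?thesis by simp
      qed
      hence "exp (- \<beta> * lam i) * W i \<le> exp (\<beta> * \<mu>) * W i" using W0 by (rule mult_right_mono)
      thus ?thesis using True W0[of i] by simp
    next
      case False
      have "exp (- \<beta> * lam i) \<le> 1" using False be by simp
      hence "exp (- \<beta> * lam i) * W i \<le> 1 * W i" using W0 by (rule mult_right_mono)
      thus ?thesis using False by simp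
    qed
  qed
  also have "\<dots> = exp (\<beta> * \<mu>) * rho + 1"
    unfolding rho_def sum.distrib W1 sum_distrib_left[symmetric] sum.inter_filter[OF fin] by simp
  finally have c2: "(\<Sum>i\<in>\<Omega>. exp (- \<beta> * lam i) * W i) \<le> exp (\<beta> * \<mu>) * rho + 1" .
  have c3: "exp s1 * E \<le> exp s2 * (exp (\<beta> * \<mu>) * rho + 1)"
    using c1 c2 by (meson exp_gt_zero less_imp_le mult_left_mono order_trans)
  have "exp (- s2 - \<beta> * \<mu>) * (exp s1 * E) \<le> exp (- s2 - \<beta> * \<mu>) * (exp s2 * (exp (\<beta> * \<mu>) * rho + 1))"
    using c3 by (simp add: mult_left_mono)
  moreover have "exp (- s2 - \<beta> * \<mu>) * (exp s1 * E) = exp (- \<beta> * \<mu> / 2) * E"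
  proof -
    have k1: "- s2 - \<beta> * \<mu> + s1 = - \<beta> * \<mu> / 2" by (simp add: s1_def s2_def algebra_simps)
    have "exp (- s2 - \<beta> * \<mu>) * (exp s1 * E) = exp (- s2 - \<beta> * \<mu> + s1) * E"
      by (simp only: exp_add mult.assoc)
    thus ?thesis by (simp only: k1)
  qed
  moreover have "exp (- s2 - \<beta> * \<mu>) * (exp s2 * (exp (\<beta> * \<mu>) * rho + 1)) = rho + exp (- \<beta> * \<mu>)"
  proof -
    have k2: "- s2 - \<beta> * \<mu> + s2 = - \<beta> * \<mu>" by simp
    have e1: "exp (- s2 - \<beta> * \<mu>) * exp s2 = exp (- \<beta> * \<mu>)"
      by (simp only: exp_add[symmetric] k2)
    have e2: "exp (- \<beta> * \<mu>) * exp (\<beta> * \<mu>) = 1"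
      by (simp add: exp_minus)
    have "exp (- s2 - \<beta> * \<mu>) * (exp s2 * (exp (\<beta> * \<mu>) * rho + 1))
        = (exp (- s2 - \<beta> * \<mu>) * exp s2) * (exp (\<beta> * \<mu>) * rho + 1)" by (simp only: mult.assoc)
    also have "\<dots> = exp (- \<beta> * \<mu>) * (exp (\<beta> * \<mu>) * rho + 1)" by (simp only: e1)
    also have "\<dots> = (exp (- \<beta> * \<mu>) * exp (\<beta> * \<mu>)) * rho + exp (- \<beta> * \<mu>)"
      by (simp only: distrib_left mult.assoc mult_1_right)
    also have "\<dots> = rho + exp (- \<beta> * \<mu>)" by (simp only: e2 mult_1_left)
    finally show ?thesis .
  qed
  ultimately have "exp (- \<beta> * \<mu> / 2) * E \<le> rho + exp (- \<beta> * \<mu>)" by simp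
  moreover have "exp (- \<beta> * \<mu> / 2) * exp (- \<beta> * \<mu> / 2) = exp (- \<beta> * \<mu>)"
    by (simp only: exp_add[symmetric]) simp
  ultimately have "exp (- \<beta> * \<mu> / 2) * (E - exp (- \<beta> * \<mu> / 2)) \<le> rho"
    by (simp only: right_diff_distrib)
  thus ?thesis unfolding rho_eq E_def .
qed


end
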